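(* (a) If $0<\alpha\le\frac{1}{19}$ and $2+2\alpha<p<\frac52+2\alpha$, then $$\int_0^1 I_t\left(\frac{2+\alpha}{p},1-\frac{2+\alpha}{p}\right)t^{2p-4\alpha-5}(1-t^4)^\alpha\,dt-\frac{1}{4(\alpha+1)}\le0.$$ (b) If $0<\alpha\le\frac{1}{15000}$ and $\frac52+2\alpha\le p\le3+2\alpha$, then the same inequality holds.
   Context: $B(x,y)=\int_0^1 u^{x-1}(1-u)^{y-1}du$ is the Beta function, $B_t(x,y)=\int_0^t u^{x-1}(1-u)^{y-1}du$ the incomplete Beta function, and $I_t(x,y)=B_t(x,y)/B(x,y)$ the regularized incomplete Beta function. *)

theory Defs
  imports "HOL-Analysis.Analysis"
begin

text \<open>Incomplete Beta function B_t(x,y) = int_0^t u^(x-1) (1-u)^(y-1) du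
  (Henstock-Kurzweil integral; the integrand is nonnegative, so this agrees
  with the Lebesgue integral whenever the latter exists).\<close>
definition incBeta :: "real \<Rightarrow> real \<Rightarrow> real \<Rightarrow> real" where
  "incBeta t x y = integral {0..t} (\<lambda>u. u powr (x - 1) * (1 - u) powr (y - 1))"

definition regIncBeta :: "real \<Rightarrow> real \<Rightarrow> real \<Rightarrow> real" where
  "regIncBeta t x y = incBeta t x y / Beta x y"

end

theory Submission
  imports Defs
begin
lemma powr_neg_bound:
  fixes u r :: real
  assumes "0 < u" "u \<le> 1" "0 \<le> r"
  shows "1 + r * (1 - u) \<le> u powr (- r)"
proof -
  have "u powr (-r) = exp (- r * ln u)" using assms by (simp add: powr_def)
  moreover have "1 + (- r * ln u) \<le> exp (- r * ln u)" by (rule exp_ge_add_one_self)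
  moreover have "ln u \<le> u - 1" using assms by (simp add: ln_le_minus_one)
  moreover have "r * (1 - u) \<le> r * (- ln u)" using assms calculation(3)
    by (intro mult_left_mono) auto
  ultimately show ?thesis by linarith
qed

lemma fq_le_ln:
  fixes u q :: real
  assumes "0 < u" "0 < q"
  shows "(1 - u powr q) / q \<le> - ln u"
proof -
  have "u powr q = exp (q * ln u)" using assms by (simp add: powr_def)
  moreover have "1 + q * ln u \<le> exp (q * ln u)" by (rule exp_ge_add_one_self)
  ultimately have "1 - u powr q \<le> q * (- ln u)" by linarith
  thus ?thesis using assms by (simp add: divide_le_eq mult.commute)
qed

lemma ln_sqrt_bound:
  fixes s :: real
  assumes "0 < s" "s \<le> 1"
  shows "- 2 * ln s \<le> 1 / s - s"
proof -
  let ?h = "\<lambda>s::real. 1 / s - s + 2 * ln s"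
  have "?h s \<ge> ?h 1"
  proof (rule DERIV_nonpos_imp_nonincreasing[OF assms(2)])
    fix x :: real assume x: "s \<le> x" "x \<le> 1"
    hence xp: "x > 0" using assms by linarith
    have "DERIV ?h x :> (- 1 / x^2 - 1 + 2 / x)"
      using xp by (auto intro!: derivative_eq_intros simp: power2_eq_square field_simps)
    moreover have "- 1 / x^2 - 1 + 2 / x = - ((1 - x)^2 / x^2)"
      using xp by (simp add: field_simps power2_eq_square)
    moreover have "(1 - x)^2 / x^2 \<ge> 0" by simp
    ultimately show "\<exists>y. DERIV ?h x :> y \<and> y \<le> 0" by (intro exI[of _ "- 1 / x^2 - 1 + 2 / x"]) auto
  qed
  thus ?thesis by simp
qed

lemma fq_le_P1:
  fixes u q :: real
  assumes "0 < u" "u < 1" "0 < q"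
  shows "(1 - u powr q) / q \<le> (1 - u) * u powr (- 1/2)"
proof -
  define s where "s = u powr (1/2)"
  have s: "s > 0" "s \<le> 1" using assms powr_mono2[of "1/2" u 1] unfolding s_def by auto
  have "- 2 * ln s \<le> 1 / s - s" by (rule ln_sqrt_bound[OF s])
  moreover have "ln s = ln u / 2" using assms unfolding s_def by (simp add: ln_powr)
  moreover have "1 / s = u powr (- 1/2)" unfolding s_def using assms
    by (simp add: powr_minus_divide)
  moreover have "u * u powr (- 1/2) = s"
  proof -
    have "u * u powr (- 1/2) = u powr 1 * u powr (- 1/2)" using assms by simp
    also have "\<dots> = u powr (1 + - 1/2)" by (simp only: powr_add)
    finally show ?thesis unfolding s_def by simp
  qed
  moreover have "(1 - u) * u powr (- 1/2) = 1 / s - s"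
    using calculation(3,4) by (simp add: left_diff_distrib)
  ultimately have "- ln u \<le> (1 - u) * u powr (- 1/2)" by linarith
  thus ?thesis using fq_le_ln[OF assms(1,3)] by linarith
qed

lemma fq_le_P2:
  fixes u q :: real
  assumes "0 < u" "u < 1" "0 < q" "q \<le> 1"
  shows "(1 - u powr q) / q \<le> (1 - u) * (1 - (1 - q) * u) / q"
proof -
  have "1 + (1 - q) * (1 - u) \<le> u powr (- (1 - q))" by (rule powr_neg_bound) (use assms in auto)
  hence "u * (1 + (1 - q) * (1 - u)) \<le> u * u powr (q - 1)" using assms by (simp add: mult_left_mono)
  also have "u * u powr (q - 1) = u powr q" using assms by (simp add: powr_add[symmetric] powr_mult_base)
  finally have "1 - u powr q \<le> (1 - u) * (1 - (1 - q) * u)" by (simp add: algebra_simps)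
  thus ?thesis using assms by (simp add: divide_right_mono)
qed

lemma fq_le_P4:
  fixes u q :: real
  assumes "0 < u" "u < 1" "0 < q" "q \<le> 2"
  shows "(1 - u powr q) / q \<le> (1 - u) * (1 + u - (2 - q) * u^2) / q"
proof -
  have "1 + (2 - q) * (1 - u) \<le> u powr (- (2 - q))" by (rule powr_neg_bound) (use assms in auto)
  hence "u^2 * (1 + (2 - q) * (1 - u)) \<le> u^2 * u powr (q - 2)" using assms by (simp add: mult_left_mono)
  also have "u^2 * u powr (q - 2) = u powr q"
  proof -
    have e: "u^2 = u powr 2" using assms by (simp add: powr_realpow)
    have "u^2 * u powr (q - 2) = u powr 2 * u powr (q - 2)" by (simp only: e)
    also have "\<dots> = u powr (2 + (q - 2))" by (simp only: powr_add)
    also have "\<dots> = u powr q" by simp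
    finally show ?thesis .
  qed
  finally have "1 - u powr q \<le> (1 - u) * (1 + u - (2 - q) * u^2)" by (simp add: algebra_simps power2_eq_square)
  thus ?thesis using assms by (simp add: divide_right_mono)
qed

lemma not_nonpos_Int_pos: "(x::real) > 0 \<Longrightarrow> x \<notin> \<int>\<^sub>\<le>\<^sub>0"
  by (auto elim!: nonpos_Ints_cases)

lemma Beta_pos: "(x::real) > 0 \<Longrightarrow> y > 0 \<Longrightarrow> Beta x y > 0"
  by (simp add: Beta_def)

lemma Beta_x_1: "(x::real) > 0 \<Longrightarrow> Beta x 1 = 1 / x"
proof -
  assume x: "x > 0"
  have "Gamma (x + 1) = x * Gamma x" using not_nonpos_Int_pos[OF x] by (simp add: Gamma_plus1)
  moreover have "Gamma x > 0" using x by simp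
  ultimately show ?thesis by (simp add: Beta_def)
qed

lemma Beta_1_y: "(y::real) > 0 \<Longrightarrow> Beta 1 y = 1 / y"
  using Beta_x_1 Beta_commute by metis

lemma Beta_ge_inv:
  fixes a b :: real assumes "0 < a" "a \<le> 1" "0 < b"
  shows "1 / b \<le> Beta a b"
  using Beta_real_mono[of a 1 b b] Beta_1_y[of b] assms by simp

lemma Beta_r1:
  fixes a b :: real assumes "0 < a" "0 < b" "a + b = 1"
  shows "Beta a (b + 1) = b * Beta a b"
  using Beta_plus1_right[of b a] not_nonpos_Int_pos[of b] assms by simp

lemma Beta_r2:
  fixes a b :: real assumes "0 < a" "0 < b" "a + b = 1"
  shows "Beta (a + 1) (b + 1) = a * b / 2 * Beta a b"
proof -
  have eq: "(a + (b + 1)) * Beta (a + 1) (b + 1) = a * Beta a (b + 1)"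
    using Beta_plus1_left[of a "b+1"] not_nonpos_Int_pos[of a] assms by simp
  have e: "a + (b + 1) = 2" using assms by simp
  have "2 * Beta (a + 1) (b + 1) = a * Beta a (b + 1)" using eq unfolding e .
  thus ?thesis using Beta_r1[OF assms] by simp
qed

lemma Beta_r3:
  fixes a b :: real assumes "0 < a" "0 < b" "a + b = 1"
  shows "Beta (a + 2) (b + 1) = (a + 1) * a * b / 6 * Beta a b"
proof -
  have eq: "((a + 1) + (b + 1)) * Beta ((a + 1) + 1) (b + 1) = (a + 1) * Beta (a + 1) (b + 1)"
    using Beta_plus1_left[of "a+1" "b+1"] not_nonpos_Int_pos[of "a+1"] assms by simp
  have e1: "(a + 1) + 1 = a + 2" by simp
  have e2: "(a + 1) + (b + 1) = 3" using assms by simp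
  have "3 * Beta (a + 2) (b + 1) = (a + 1) * Beta (a + 1) (b + 1)" using eq unfolding e1 e2 .
  thus ?thesis using Beta_r2[OF assms] by simp
qed

lemma beta_int_open:
  fixes x y :: real assumes "0 < x" "0 < y"
  shows "((\<lambda>u. u powr (x - 1) * (1 - u) powr (y - 1)) has_integral Beta x y) {0<..<1}"
  using has_integral_Beta_real[OF assms] by (simp add: has_integral_Icc_iff_Ioo)

lemma beta_shift:
  fixes u a b m n :: real assumes "0 < u" "u < 1"
  shows "u powr m * (1 - u) powr n * (u powr (a - 1) * (1 - u) powr (b - 1))
       = u powr ((a + m) - 1) * (1 - u) powr ((b + n) - 1)"
proof -
  have "u powr m * u powr (a - 1) = u powr ((a + m) - 1)" by (simp add: powr_add[symmetric] algebra_simps)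
  moreover have "(1 - u) powr n * (1 - u) powr (b - 1) = (1 - u) powr ((b + n) - 1)"
    by (simp add: powr_add[symmetric] algebra_simps)
  ultimately show ?thesis by (metis mult.assoc mult.left_commute)
qed

lemma key:
  fixes a b q K :: real and R :: "real \<Rightarrow> real"
  assumes a: "0 < a" and b: "0 < b" and q: "0 < q"
  and Rb: "\<And>u. u \<in> {0<..<1} \<Longrightarrow> (1 - u powr q) / q \<le> R u"
  and RK: "((\<lambda>u. R u * (u powr (a - 1) * (1 - u) powr (b - 1))) has_integral K) {0<..<1}"
  shows "\<exists>Y. ((\<lambda>x. x powr (q - 1) * regIncBeta x a b) has_integral Y) {0..1} \<and> Y \<le> K / Beta a b"
proof -
  define \<phi> where "\<phi> = (\<lambda>u::real. u powr (a - 1) * (1 - u) powr (b - 1))"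
  define B where "B = Beta a b"
  have Bpos: "B > 0" unfolding B_def using a b by (rule Beta_pos)
  have \<phi>int: "\<phi> integrable_on {0..1}" unfolding \<phi>_def using integrable_Beta'[OF a b] .
  define F where "F = (\<lambda>t. integral {0..t} \<phi> / B)"
  have Feq: "regIncBeta x a b = F x" for x
    unfolding F_def regIncBeta_def incBeta_def \<phi>_def B_def ..
  have contF: "continuous_on {0..1} F"
    unfolding F_def by (intro continuous_on_divide continuous_on_const indefinite_integral_continuous_1 \<phi>int)
      (use Bpos in auto)
  have derivF: "(F has_vector_derivative (\<phi> x / B)) (at x)" if x: "x \<in> {0<..<1}" for x
  proof -
    have "isCont \<phi> x" unfolding \<phi>_def using x by (auto intro!: continuous_intros)
    hence "continuous (at x within ({0..1} - {})) \<phi>" by (simp add: continuous_at_imp_continuous_within)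
    from integral_has_vector_derivative_continuous_at[OF \<phi>int _ _ this] x
    have "((\<lambda>u. integral {0..u} \<phi>) has_vector_derivative \<phi> x) (at x within {0..1})" by auto
    moreover have "at x within {0..1} = at x" using x by (intro at_within_interior) auto
    ultimately have "((\<lambda>u. integral {0..u} \<phi>) has_field_derivative \<phi> x) (at x)"
      by (simp add: has_real_derivative_iff_has_vector_derivative)
    hence "((\<lambda>u. integral {0..u} \<phi> / B) has_field_derivative \<phi> x / B) (at x)"
      by (rule DERIV_cdivide)
    thus ?thesis unfolding F_def by (simp add: has_real_derivative_iff_has_vector_derivative)
  qed
  define G where "G = (\<lambda>x::real. (x powr q - 1) / q)"
  have contG: "continuous_on {0..1} G"
    unfolding G_def using q by (intro continuous_intros continuous_on_powr') auto
  have derivG: "(G has_vector_derivative (x powr (q - 1))) (at x)" if x: "x \<in> {0<..<1}" for x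
  proof -
    have "(G has_field_derivative (q * x powr (q - 1) / q)) (at x)"
      unfolding G_def using x by (auto intro!: derivative_eq_intros)
    thus ?thesis using q by (simp add: has_real_derivative_iff_has_vector_derivative)
  qed
  define h where "h = (\<lambda>u. (1 - u powr q) / q * \<phi> u)"
  have hnn: "0 \<le> h u" if "u \<in> {0<..<1}" for u
  proof -
    have "u powr q \<le> 1 powr q" using that q by (intro powr_mono2) auto
    thus ?thesis unfolding h_def \<phi>_def using that q by auto
  qed
  have hle: "h u \<le> R u * \<phi> u" if "u \<in> {0<..<1}" for u
    unfolding h_def using Rb[OF that] that by (intro mult_right_mono) (auto simp: \<phi>_def)
  have Rint: "(\<lambda>u. R u * \<phi> u) integrable_on {0<..<1}" using RK unfolding \<phi>_def by blast
  have hmeas: "h \<in> borel_measurable (lebesgue_on {0<..<1})"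
  proof (rule continuous_imp_measurable_on_sets_lebesgue)
    show "continuous_on {0<..<1} h" unfolding h_def \<phi>_def
      using q by (intro continuous_intros) auto
  qed auto
  have hint: "h integrable_on {0<..<1}"
    by (rule measurable_bounded_by_integrable_imp_integrable_real[OF hmeas Rint])
       (use hnn hle in auto)
  define J where "J = integral {0<..<1} h"
  have hJ: "(h has_integral J) {0<..<1}" unfolding J_def using hint by auto
  have JK: "J \<le> K"
    using has_integral_le[OF hJ, of "\<lambda>u. R u * \<phi> u" K] RK hle unfolding \<phi>_def by auto
  have G1: "G 1 = 0" unfolding G_def by simp
  have F0: "F 0 = 0" unfolding F_def by simp
  have "((\<lambda>x. G x * (\<phi> x / B)) has_integral (- J / B)) {0<..<1}"
  proof -
    have "((\<lambda>x. - h x / B) has_integral (- J / B)) {0<..<1}"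
      using has_integral_divide[OF has_integral_neg[OF hJ], of B] by simp
    moreover have "G x * (\<phi> x / B) = - h x / B" for x
      unfolding G_def h_def by (simp add: field_simps) (simp add: minus_divide_left algebra_simps)
    ultimately show ?thesis by simp
  qed
  hence "((\<lambda>x. G x * (\<phi> x / B)) has_integral (G 1 * F 1 - G 0 * F 0 - J / B)) {0..1}"
    by (simp add: G1 F0 has_integral_Icc_iff_Ioo)
  from integration_by_parts_interior[OF bounded_bilinear_mult _ contG contF derivG derivF this]
  have "((\<lambda>x. x powr (q - 1) * F x) has_integral J / B) {0..1}" by simp
  hence "((\<lambda>x. x powr (q - 1) * regIncBeta x a b) has_integral J / B) {0..1}"
    by (simp add: Feq)
  moreover have "J / B \<le> K / B" using JK Bpos by (simp add: divide_right_mono)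
  ultimately show ?thesis unfolding B_def by blast
qed

lemma A2poly:
  fixes al d :: real
  assumes a0: "0 < al" and a1: "al \<le> 1/19" and d0: "1/8 \<le> d" and d1: "d \<le> 1/2"
  shows "(1+al)*(d+al)*(2 + 3*al + 6*d + 2*al*d) \<le> d*(2+2*al+d)^2"
proof -
  have e: "d*(2+2*al+d)^2 - (1+al)*(d+al)*(2 + 3*al + 6*d + 2*al*d)
     = 2*d - 2*d^2 + d^3 - al*(2 + 3*d + 4*d^2) - al^2*(5 + 7*d + 2*d^2) - al^3*(3 + 2*d)"
    by (simp add: algebra_simps power2_eq_square power3_eq_cube)
  have p1: "0 \<le> 2 + 3*d + 4*d^2" "0 \<le> 5 + 7*d + 2*d^2" "0 \<le> 3 + 2*d" using d0 by (auto intro!: add_nonneg_nonneg)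
  have "al^2 \<le> (1/19)^2" by (rule power_mono) (use a0 a1 in auto)
  hence al2: "al^2 \<le> 1/361" by (simp add: power2_eq_square)
  have "al^3 \<le> (1/19)^3" by (rule power_mono) (use a0 a1 in auto)
  hence al3: "al^3 \<le> 1/6859" by (simp add: power3_eq_cube)
  have m1: "al*(2 + 3*d + 4*d^2) \<le> (1/19)*(2 + 3*d + 4*d^2)" using mult_right_mono[OF a1 p1(1)] .
  have m2: "al^2*(5 + 7*d + 2*d^2) \<le> (1/361)*(5 + 7*d + 2*d^2)" using mult_right_mono[OF al2 p1(2)] .
  have m3: "al^3*(3 + 2*d) \<le> (1/6859)*(3 + 2*d)" using mult_right_mono[OF al3 p1(3)] .
  have "0 \<le> (d - 1/8)*(1/2 - d)" by (intro mult_nonneg_nonneg) (use d0 d1 in auto)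
  moreover have "(d - 1/8)*(1/2 - d) = 5/8*d - d^2 - 1/16" by (simp add: field_simps power2_eq_square)
  ultimately have dd: "d^2 \<le> 5/8*d - 1/16" by linarith
  have d3: "0 \<le> d^3" using d0 by simp
  have "0 \<le> 2*d - 2*d^2 + d^3 - al*(2 + 3*d + 4*d^2) - al^2*(5 + 7*d + 2*d^2) - al^3*(3 + 2*d)"
    using m1 m2 m3 dd d0 d1 apply (simp add: algebra_simps)
    using d3 by linarith
  thus ?thesis using e by linarith
qed

lemma Bpoly:
  fixes al d :: real
  assumes a0: "0 < al" and a1: "al \<le> 1/15000" and d0: "1/2 \<le> d" and d1: "d \<le> 1"
  shows "(d+al)*((2+2*al+d)^2 + (2+al)*(2+2*al+d)/2 - (1-d)*((2+al)+(2+2*al+d))*(2+al)/3)*4*(1+al) \<le> 2*d*(2+2*al+d)^3"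
proof -
  have e: "2*d*(2+2*al+d)^3 - (d+al)*((2+2*al+d)^2 + (2+al)*(2+2*al+d)/2 - (1-d)*((2+al)+(2+2*al+d))*(2+al)/3)*4*(1+al)
     = 8/3*d - 4*d^2 + 16/3*d^3 + 2*d^4 - al*(40/3 + 24*d + 50/3*d^2 - 4*d^3)
       - al^2*(44 + 170/3*d + 18*d^2 + 4/3*d^3) - al^3*(140/3 + 34*d + 16/3*d^2) - al^4*(16 + 4*d)"
    by (simp add: field_simps power2_eq_square power3_eq_cube power4_eq_xxxx)
  have dsq: "d^2 \<le> 1" using d0 d1 by (simp add: power_le_one)
  have dcu: "d^3 \<le> 1" using d0 d1 by (simp add: power_le_one)
  have dcu0: "0 \<le> d^3" using d0 by simp
  have x1: "40/3 + 24*d + 50/3*d^2 - 4*d^3 \<le> 54" using dsq dcu0 d1 by linarith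
  have x2: "44 + 170/3*d + 18*d^2 + 4/3*d^3 \<le> 121" using dsq dcu d1 by linarith
  have x3: "140/3 + 34*d + 16/3*d^2 \<le> 86" using dsq d1 by linarith
  have x4: "16 + 4*d \<le> 20" using d1 by linarith
  have al1: "al \<le> 1" using a1 by simp
  have al2: "al^2 \<le> al" using a0 al1 by (simp add: power2_eq_square mult_le_cancel_left1)
  have al3: "al^3 \<le> al" using a0 al1 by (simp add: power3_eq_cube mult_le_one mult_le_cancel_left1)
  have al4: "al^4 \<le> al" using a0 al1 by (simp add: power4_eq_xxxx mult_le_one mult_le_cancel_left1)
  have m1: "al*(40/3 + 24*d + 50/3*d^2 - 4*d^3) \<le> al*54" using x1 a0 by (intro mult_left_mono) auto
  have m2: "al^2*(44 + 170/3*d + 18*d^2 + 4/3*d^3) \<le> al^2*121" using x2 a0 by (intro mult_left_mono) auto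
  have m3: "al^3*(140/3 + 34*d + 16/3*d^2) \<le> al^3*86" using x3 a0 by (intro mult_left_mono) auto
  have m4: "al^4*(16 + 4*d) \<le> al^4*20" using x4 a0 by (intro mult_left_mono) auto
  have "(1/2) * d^2 \<le> d * d^2" using d0 by (intro mult_right_mono) auto
  hence d3: "(1/2) * d^2 \<le> d^3" by (simp add: power3_eq_cube power2_eq_square)
  have d4: "0 \<le> d^4" by simp
  have "0 \<le> (d - 1/2)*(1 - d)" by (intro mult_nonneg_nonneg) (use d0 d1 in auto)
  moreover have "(d - 1/2)*(1 - d) = 3/2*d - d^2 - 1/2" by (simp add: field_simps power2_eq_square)
  ultimately have dd: "d^2 \<le> 3/2*d - 1/2" by linarith
  have "0 \<le> 8/3*d - 4*d^2 + 16/3*d^3 + 2*d^4 - al*(40/3 + 24*d + 50/3*d^2 - 4*d^3)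
       - al^2*(44 + 170/3*d + 18*d^2 + 4/3*d^3) - al^3*(140/3 + 34*d + 16/3*d^2) - al^4*(16 + 4*d)"
    using m1 m2 m3 m4 al2 al3 al4 a1 a0 d3 d4 dd d0 by linarith
  thus ?thesis using e by linarith
qed

lemma gk:
  fixes u a b m :: real assumes "0 < u" "u < 1"
  shows "u powr ((a + m) - 1) * (1 - u) powr ((b + 1) - 1) = u powr m * (1 - u) * (u powr (a - 1) * (1 - u) powr (b - 1))"
  using beta_shift[OF assms, of m 1 a b] assms by simp

lemma regIncBeta_nonneg:
  fixes a b t :: real assumes "0 < a" "0 < b" "0 \<le> t" "t \<le> 1"
  shows "0 \<le> regIncBeta t a b"
proof -
  have "(\<lambda>u. u powr (a - 1) * (1 - u) powr (b - 1)) integrable_on {0..t}"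
    by (rule integrable_on_subinterval[OF integrable_Beta'[OF assms(1,2)]]) (use assms in auto)
  hence "0 \<le> incBeta t a b" unfolding incBeta_def
    by (rule integral_nonneg) (use assms in auto)
  moreover have "Beta a b > 0" using assms by (intro Beta_pos)
  ultimately show ?thesis unfolding regIncBeta_def by simp
qed

lemma caseP1:
  fixes a b q :: real
  assumes a: "1/2 < a" "a \<le> 1" and b: "0 < b" and q: "0 < q"
  shows "\<exists>Y. ((\<lambda>x. x powr (q - 1) * regIncBeta x a b) has_integral Y) {0..1} \<and> Y \<le> b / (a - 1/2)"
proof -
  define K where "K = Beta (a - 1/2) (b + 1)"
  have RK: "((\<lambda>u. ((1 - u) * u powr (- 1/2)) * (u powr (a - 1) * (1 - u) powr (b - 1))) has_integral K) {0<..<1}"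
  proof -
    have "((\<lambda>u. u powr ((a + (- 1/2)) - 1) * (1 - u) powr ((b + 1) - 1)) has_integral K) {0<..<1}"
      unfolding K_def using beta_int_open[of "a - 1/2" "b + 1"] a b by simp
    moreover have "u powr ((a + (- 1/2)) - 1) * (1 - u) powr ((b + 1) - 1)
        = ((1 - u) * u powr (- 1/2)) * (u powr (a - 1) * (1 - u) powr (b - 1))" if "u \<in> {0<..<1}" for u
      using gk[of u a "- 1/2" b] that by (simp add: mult_ac)
    ultimately show ?thesis using has_integral_cong by (metis (no_types, lifting))
  qed
  obtain Y where Y: "((\<lambda>x. x powr (q - 1) * regIncBeta x a b) has_integral Y) {0..1}" "Y \<le> K / Beta a b"
  proof -
    have a0: "0 < a" using a by simp
    have Rb: "(1 - u powr q) / q \<le> (1 - u) * u powr (- 1/2)" if "u \<in> {0<..<1}" for u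
      using fq_le_P1[of u q] that q by simp
    show ?thesis using that key[OF a0 b q Rb RK] by blast
  qed
  have Kle: "K \<le> 1 / (a - 1/2)"
    unfolding K_def using Beta_real_mono[of "a - 1/2" "a - 1/2" 1 "b + 1"] Beta_x_1[of "a - 1/2"] a b by simp
  have K0: "0 \<le> K" unfolding K_def using Beta_pos[of "a - 1/2" "b + 1"] a b by simp
  have B: "1 / b \<le> Beta a b" using Beta_ge_inv[of a b] a b by simp
  have Bp: "0 < Beta a b" using Beta_pos[of a b] a b by simp
  have "K / Beta a b \<le> K * b"
  proof -
    have "1 / Beta a b \<le> b" using B Bp b by (simp add: field_simps)
    hence "K * (1 / Beta a b) \<le> K * b" using K0 by (intro mult_left_mono) auto
    thus ?thesis by simp
  qed
  also have "K * b \<le> (1 / (a - 1/2)) * b" using Kle b by (intro mult_right_mono) auto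
  finally show ?thesis using Y by (intro exI[of _ Y]) auto
qed

lemma caseP2:
  fixes a b q :: real
  assumes a: "0 < a" and b: "0 < b" and ab: "a + b = 1" and q: "0 < q" "q \<le> 1"
  shows "\<exists>Y. ((\<lambda>x. x powr (q - 1) * regIncBeta x a b) has_integral Y) {0..1} \<and> Y \<le> (b - (1 - q) * a * b / 2) / q"
proof -
  define K where "K = (Beta (a + 0) (b + 1) - (1 - q) * Beta (a + 1) (b + 1)) / q"
  have RK: "((\<lambda>u. ((1 - u) * (1 - (1 - q) * u) / q) * (u powr (a - 1) * (1 - u) powr (b - 1))) has_integral K) {0<..<1}"
  proof -
    have i1: "((\<lambda>u. u powr ((a + 0) - 1) * (1 - u) powr ((b + 1) - 1)) has_integral Beta (a + 0) (b + 1)) {0<..<1}"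
      using beta_int_open[of "a + 0" "b + 1"] a b by simp
    have i2: "((\<lambda>u. u powr ((a + 1) - 1) * (1 - u) powr ((b + 1) - 1)) has_integral Beta (a + 1) (b + 1)) {0<..<1}"
      using beta_int_open[of "a + 1" "b + 1"] a b by simp
    have "((\<lambda>u. (u powr ((a + 0) - 1) * (1 - u) powr ((b + 1) - 1)
              - (1 - q) * (u powr ((a + 1) - 1) * (1 - u) powr ((b + 1) - 1))) / q) has_integral K) {0<..<1}"
      unfolding K_def by (intro has_integral_divide has_integral_diff has_integral_mult_right i1 i2)
    moreover have "(u powr ((a + 0) - 1) * (1 - u) powr ((b + 1) - 1)
              - (1 - q) * (u powr ((a + 1) - 1) * (1 - u) powr ((b + 1) - 1))) / q
        = ((1 - u) * (1 - (1 - q) * u) / q) * (u powr (a - 1) * (1 - u) powr (b - 1))" if "u \<in> {0<..<1}" for u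
    proof -
      define P where "P = u powr (a - 1) * (1 - u) powr (b - 1)"
      have u: "0 < u" "u < 1" using that by auto
      have e1: "u powr ((a + 0) - 1) * (1 - u) powr ((b + 1) - 1) = (1 - u) * P"
      proof -
        have "u powr ((a + 0) - 1) * (1 - u) powr ((b + 1) - 1) = u powr 0 * (1 - u) * P"
          unfolding P_def by (rule gk[OF u])
        also have "u powr 0 * (1 - u) * P = (1 - u) * P" using u by simp
        finally show ?thesis .
      qed
      have e2: "u powr ((a + 1) - 1) * (1 - u) powr ((b + 1) - 1) = u * (1 - u) * P"
      proof -
        have "u powr ((a + 1) - 1) * (1 - u) powr ((b + 1) - 1) = u powr 1 * (1 - u) * P"
          unfolding P_def by (rule gk[OF u])
        also have "u powr 1 * (1 - u) * P = u * (1 - u) * P" using u by simp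
        finally show ?thesis .
      qed
      have alg: "((1 - u) * P - (1 - q) * (u * (1 - u) * P)) / q = ((1 - u) * (1 - (1 - q) * u) / q) * P"
        using q by (simp add: field_simps)
      show ?thesis unfolding e1 e2 P_def[symmetric] by (rule alg)
    qed
    ultimately show ?thesis using has_integral_cong by (metis (no_types, lifting))
  qed
  obtain Y where Y: "((\<lambda>x. x powr (q - 1) * regIncBeta x a b) has_integral Y) {0..1}" "Y \<le> K / Beta a b"
  proof -
    have Rb: "(1 - u powr q) / q \<le> (1 - u) * (1 - (1 - q) * u) / q" if "u \<in> {0<..<1}" for u
      using fq_le_P2[of u q] that q by simp
    show ?thesis using that key[OF a b q(1) Rb RK] by blast
  qed
  have Bp: "0 < Beta a b" using Beta_pos[of a b] a b by simp
  have "K / Beta a b = (b - (1 - q) * a * b / 2) / q"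
    unfolding K_def using Beta_r1[OF a b ab] Beta_r2[OF a b ab] Bp q by (simp add: field_simps)
  thus ?thesis using Y by auto
qed

lemma caseP4:
  fixes a b q :: real
  assumes a: "0 < a" and b: "0 < b" and ab: "a + b = 1" and q: "0 < q" "q \<le> 2"
  shows "\<exists>Y. ((\<lambda>x. x powr (q - 1) * regIncBeta x a b) has_integral Y) {0..1} \<and>
     Y \<le> (b + a * b / 2 - (2 - q) * (a + 1) * a * b / 6) / q"
proof -
  define K where "K = (Beta (a + 0) (b + 1) + Beta (a + 1) (b + 1) - (2 - q) * Beta (a + 2) (b + 1)) / q"
  have RK: "((\<lambda>u. ((1 - u) * (1 + u - (2 - q) * u^2) / q) * (u powr (a - 1) * (1 - u) powr (b - 1))) has_integral K) {0<..<1}"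
  proof -
    have i1: "((\<lambda>u. u powr ((a + 0) - 1) * (1 - u) powr ((b + 1) - 1)) has_integral Beta (a + 0) (b + 1)) {0<..<1}"
      using beta_int_open[of "a + 0" "b + 1"] a b by simp
    have i2: "((\<lambda>u. u powr ((a + 1) - 1) * (1 - u) powr ((b + 1) - 1)) has_integral Beta (a + 1) (b + 1)) {0<..<1}"
      using beta_int_open[of "a + 1" "b + 1"] a b by simp
    have i3: "((\<lambda>u. u powr ((a + 2) - 1) * (1 - u) powr ((b + 1) - 1)) has_integral Beta (a + 2) (b + 1)) {0<..<1}"
      using beta_int_open[of "a + 2" "b + 1"] a b by simp
    have "((\<lambda>u. (u powr ((a + 0) - 1) * (1 - u) powr ((b + 1) - 1)
              + u powr ((a + 1) - 1) * (1 - u) powr ((b + 1) - 1)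
              - (2 - q) * (u powr ((a + 2) - 1) * (1 - u) powr ((b + 1) - 1))) / q) has_integral K) {0<..<1}"
      unfolding K_def by (intro has_integral_divide has_integral_diff has_integral_add has_integral_mult_right i1 i2 i3)
    moreover have "(u powr ((a + 0) - 1) * (1 - u) powr ((b + 1) - 1)
              + u powr ((a + 1) - 1) * (1 - u) powr ((b + 1) - 1)
              - (2 - q) * (u powr ((a + 2) - 1) * (1 - u) powr ((b + 1) - 1))) / q
        = ((1 - u) * (1 + u - (2 - q) * u^2) / q) * (u powr (a - 1) * (1 - u) powr (b - 1))" if "u \<in> {0<..<1}" for u
    proof -
      define P where "P = u powr (a - 1) * (1 - u) powr (b - 1)"
      have u: "0 < u" "u < 1" using that by auto
      have e1: "u powr ((a + 0) - 1) * (1 - u) powr ((b + 1) - 1) = (1 - u) * P"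
      proof -
        have "u powr ((a + 0) - 1) * (1 - u) powr ((b + 1) - 1) = u powr 0 * (1 - u) * P"
          unfolding P_def by (rule gk[OF u])
        also have "u powr 0 * (1 - u) * P = (1 - u) * P" using u by simp
        finally show ?thesis .
      qed
      have e2: "u powr ((a + 1) - 1) * (1 - u) powr ((b + 1) - 1) = u * (1 - u) * P"
      proof -
        have "u powr ((a + 1) - 1) * (1 - u) powr ((b + 1) - 1) = u powr 1 * (1 - u) * P"
          unfolding P_def by (rule gk[OF u])
        also have "u powr 1 * (1 - u) * P = u * (1 - u) * P" using u by simp
        finally show ?thesis .
      qed
      have e3: "u powr ((a + 2) - 1) * (1 - u) powr ((b + 1) - 1) = u^2 * (1 - u) * P"
      proof -
        have "u powr ((a + 2) - 1) * (1 - u) powr ((b + 1) - 1) = u powr 2 * (1 - u) * P"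
          unfolding P_def by (rule gk[OF u])
        also have "u powr 2 * (1 - u) * P = u^2 * (1 - u) * P" using u by (simp add: powr_numeral)
        finally show ?thesis .
      qed
      have alg: "((1 - u) * P + u * (1 - u) * P - (2 - q) * (u^2 * (1 - u) * P)) / q
          = ((1 - u) * (1 + u - (2 - q) * u^2) / q) * P"
        using q by (simp add: field_simps)
      show ?thesis unfolding e1 e2 e3 P_def[symmetric] by (rule alg)
    qed
    ultimately show ?thesis using has_integral_cong by (metis (no_types, lifting))
  qed
  obtain Y where Y: "((\<lambda>x. x powr (q - 1) * regIncBeta x a b) has_integral Y) {0..1}" "Y \<le> K / Beta a b"
  proof -
    have Rb: "(1 - u powr q) / q \<le> (1 - u) * (1 + u - (2 - q) * u^2) / q" if "u \<in> {0<..<1}" for u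
      using fq_le_P4[of u q] that q by simp
    show ?thesis using that key[OF a b q(1) Rb RK] by blast
  qed
  have Bp: "0 < Beta a b" using Beta_pos[of a b] a b by simp
  have "K / Beta a b = (b + a * b / 2 - (2 - q) * (a + 1) * a * b / 6) / q"
  proof -
    have v1: "Beta (a + 0) (b + 1) = b * Beta a b" using Beta_r1[OF a b ab] by simp
    have "K = (b + a * b / 2 - (2 - q) * (a + 1) * a * b / 6) * Beta a b / q"
      unfolding K_def v1 Beta_r2[OF a b ab] Beta_r3[OF a b ab] by (simp add: field_simps)
    thus ?thesis using Bp by simp
  qed
  thus ?thesis using Y by auto
qed

lemma A1poly:
  fixes al d :: real
  assumes a0: "0 < al" and a1: "al \<le> 1/19" and d0: "0 < d" and d1: "d \<le> 1/8"
  shows "8*(1+al)*(d+al) \<le> 2 - d"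
proof -
  have "al*d \<le> (1/19)*(1/8)" using a0 a1 d0 d1 by (intro mult_mono) auto
  moreover have "al*al \<le> (1/19)*(1/19)" using a0 a1 by (intro mult_mono) auto
  moreover have "8*(1+al)*(d+al) = 8*d + 8*al + 8*(al*d) + 8*(al*al)" by (simp add: algebra_simps)
  ultimately show ?thesis using a1 d1 by linarith
qed

theorem proposition4p2:
  fixes \<alpha> p :: real
  assumes "(0 < \<alpha> \<and> \<alpha> \<le> 1/19 \<and> 2 + 2*\<alpha> < p \<and> p < 5/2 + 2*\<alpha>) \<or>
           (0 < \<alpha> \<and> \<alpha> \<le> 1/15000 \<and> 5/2 + 2*\<alpha> \<le> p \<and> p \<le> 3 + 2*\<alpha>)"
  shows "integral {0..1} (\<lambda>t. regIncBeta t ((2 + \<alpha>) / p) (1 - (2 + \<alpha>) / p)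
            * t powr (2*p - 4*\<alpha> - 5) * (1 - t^4) powr \<alpha>) - 1 / (4 * (\<alpha> + 1)) \<le> 0"
proof -
  define a where "a = (2 + \<alpha>) / p"
  define b where "b = 1 - (2 + \<alpha>) / p"
  define q where "q = 2*p - 4*\<alpha> - 4"
  define d where "d = p - 2 - 2*\<alpha>"
  define T where "T = 1 / (4 * (\<alpha> + 1))"
  have al0: "0 < \<alpha>" using assms by auto
  have pgt: "2 + 2*\<alpha> < p" using assms by auto
  have pd: "p = 2 + 2*\<alpha> + d" unfolding d_def by simp
  have d0: "0 < d" using pgt unfolding d_def by simp
  have p0: "0 < p" using pgt al0 by simp
  have qd: "q = 2 * d" unfolding q_def d_def by simp
  have q0: "0 < q" using qd d0 by simp
  have ad: "a = (2 + \<alpha>) / p" by (simp add: a_def)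
  have bd: "b = (d + \<alpha>) / p" unfolding b_def using p0 pd by (simp add: field_simps)
  have a0: "0 < a" unfolding a_def using al0 p0 by simp
  have b0: "0 < b" unfolding bd using d0 al0 p0 by simp
  have ab: "a + b = 1" unfolding a_def b_def by simp
  have a1: "a \<le> 1" using ab b0 by simp
  have T0: "0 < T" unfolding T_def using al0 by simp
  obtain Y where Y: "((\<lambda>x. x powr (q - 1) * regIncBeta x a b) has_integral Y) {0..1}" "Y \<le> T"
  proof -
    consider (A1) "\<alpha> \<le> 1/19" "d \<le> 1/8" | (A2) "\<alpha> \<le> 1/19" "1/8 \<le> d" "d < 1/2"
      | (B) "\<alpha> \<le> 1/15000" "1/2 \<le> d" "d \<le> 1"
      using assms unfolding d_def by (cases "p - 2 - 2*\<alpha> \<le> 1/8") auto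
    then show ?thesis
    proof cases
      case A1
      have ah: "a - 1/2 = (2 - d) / (2 * p)" unfolding ad using p0 pd by (simp add: field_simps)
      have "0 < (2 - d) / (2 * p)" using A1 p0 by (intro divide_pos_pos) auto
      hence ah0: "1/2 < a" using ah by linarith
      obtain Y where Y: "((\<lambda>x. x powr (q - 1) * regIncBeta x a b) has_integral Y) {0..1}" "Y \<le> b / (a - 1/2)"
        using caseP1[OF ah0 a1 b0 q0] by blast
      have "b / (a - 1/2) = 2 * (d + \<alpha>) / (2 - d)" unfolding ah bd using p0 A1 by (simp add: field_simps)
      also have "\<dots> \<le> T"
      proof -
        have "8*(1+\<alpha>)*(d+\<alpha>) \<le> 2 - d" by (rule A1poly) (use al0 A1 d0 in auto)
        thus ?thesis unfolding T_def using A1 al0 by (simp add: field_simps)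
      qed
      finally show ?thesis using Y that by auto
    next
      case A2
      have q1: "q \<le> 1" using qd A2 by simp
      obtain Y where Y: "((\<lambda>x. x powr (q - 1) * regIncBeta x a b) has_integral Y) {0..1}"
           "Y \<le> (b - (1 - q) * a * b / 2) / q"
        using caseP2[OF a0 b0 ab q0 q1] by blast
      have num0: "b - (1 - q) * a * b / 2 = (d + \<alpha>) * (2*p - (1 - 2*d)*(2 + \<alpha>)) / (2 * p^2)"
        unfolding ad bd qd using p0 by (simp add: field_simps power2_eq_square)
      have "2*p - (1 - 2*d)*(2 + \<alpha>) = 2 + 3*\<alpha> + 6*d + 2*\<alpha>*d" using pd by (simp add: algebra_simps)
      hence num: "b - (1 - q) * a * b / 2 = (d + \<alpha>) * (2 + 3*\<alpha> + 6*d + 2*\<alpha>*d) / (2 * p^2)"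
        using num0 by simp
      have "(b - (1 - q) * a * b / 2) / q \<le> T"
      proof -
        have P: "(1+\<alpha>)*(d+\<alpha>)*(2 + 3*\<alpha> + 6*d + 2*\<alpha>*d) \<le> d*(2+2*\<alpha>+d)^2"
          by (rule A2poly) (use al0 A2 in auto)
        hence P': "(1+\<alpha>)*(d+\<alpha>)*(2 + 3*\<alpha> + 6*d + 2*\<alpha>*d) \<le> d*p^2" unfolding pd .
        have "(d + \<alpha>) * (2 + 3*\<alpha> + 6*d + 2*\<alpha>*d) / (2 * p^2) \<le> q * T"
          unfolding qd T_def using P' al0 d0 p0 by (simp add: field_simps)
        hence X: "(d + \<alpha>) * (2 + 3*\<alpha> + 6*d + 2*\<alpha>*d) / (2 * p^2) \<le> T * q" by (simp add: mult.commute)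
        show ?thesis unfolding num by (subst pos_divide_le_eq[OF q0]) (rule X)
      qed
      thus ?thesis using Y that by auto
    next
      case B
      have q2: "q \<le> 2" using qd B by simp
      obtain Y where Y: "((\<lambda>x. x powr (q - 1) * regIncBeta x a b) has_integral Y) {0..1}"
           "Y \<le> (b + a * b / 2 - (2 - q) * (a + 1) * a * b / 6) / q"
        using caseP4[OF a0 b0 ab q0 q2] by blast
      have num: "b + a * b / 2 - (2 - q) * (a + 1) * a * b / 6
         = (d+\<alpha>)*(p^2 + (2+\<alpha>)*p/2 - (1-d)*((2+\<alpha>)+p)*(2+\<alpha>)/3) / p^3"
        unfolding ad bd qd using p0 by (simp add: field_simps power2_eq_square power3_eq_cube)
      have "(b + a * b / 2 - (2 - q) * (a + 1) * a * b / 6) / q \<le> T"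
      proof -
        have P: "(d+\<alpha>)*((2+2*\<alpha>+d)^2 + (2+\<alpha>)*(2+2*\<alpha>+d)/2 - (1-d)*((2+\<alpha>)+(2+2*\<alpha>+d))*(2+\<alpha>)/3)*4*(1+\<alpha>) \<le> 2*d*(2+2*\<alpha>+d)^3"
          by (rule Bpoly) (use al0 B in auto)
        hence P': "(d+\<alpha>)*(p^2 + (2+\<alpha>)*p/2 - (1-d)*((2+\<alpha>)+p)*(2+\<alpha>)/3)*4*(1+\<alpha>) \<le> 2*d*p^3" unfolding pd .
        have "(d+\<alpha>)*(p^2 + (2+\<alpha>)*p/2 - (1-d)*((2+\<alpha>)+p)*(2+\<alpha>)/3) / p^3 \<le> q * T"
          unfolding qd T_def using P' al0 d0 p0 by (simp add: field_simps)
        hence X: "(d+\<alpha>)*(p^2 + (2+\<alpha>)*p/2 - (1-d)*((2+\<alpha>)+p)*(2+\<alpha>)/3) / p^3 \<le> T * q" by (simp add: mult.commute)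
        show ?thesis unfolding num by (subst pos_divide_le_eq[OF q0]) (rule X)
      qed
      thus ?thesis using Y that by auto
    qed
  qed
  define f where "f = (\<lambda>t. regIncBeta t ((2 + \<alpha>) / p) (1 - (2 + \<alpha>) / p)
            * t powr (2*p - 4*\<alpha> - 5) * (1 - t^4) powr \<alpha>)"
  have fle: "f t \<le> t powr (q - 1) * regIncBeta t a b" if t: "t \<in> {0..1}" for t
  proof -
    have e: "2*p - 4*\<alpha> - 5 = q - 1" unfolding q_def by simp
    have R: "0 \<le> regIncBeta t a b" using regIncBeta_nonneg[OF a0 b0] t by auto
    have t4: "t^4 \<le> 1" using t by (simp add: power_le_one)
    have w: "(1 - t^4) powr \<alpha> \<le> 1"
      using powr_mono2[of \<alpha> "1 - t^4" 1] t4 t al0 by (simp add: zero_le_power)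
    have "f t = (regIncBeta t a b * t powr (q - 1)) * (1 - t^4) powr \<alpha>"
      unfolding f_def a_def b_def e ..
    also have "\<dots> \<le> (regIncBeta t a b * t powr (q - 1)) * 1"
      using R w by (intro mult_left_mono) auto
    finally show ?thesis by (simp add: mult.commute)
  qed
  have "integral {0..1} f \<le> T"
  proof (cases "f integrable_on {0..1}")
    case True
    have "integral {0..1} f \<le> integral {0..1} (\<lambda>x. x powr (q - 1) * regIncBeta x a b)"
      using True Y(1) fle by (intro integral_le) auto
    also have "\<dots> = Y" using Y(1) by (simp add: integral_unique)
    finally show ?thesis using Y(2) by simp
  next
    case False
    thus ?thesis using T0 by (simp add: not_integrable_integral)
  qed
  thus ?thesis unfolding f_def T_def by simp
qed

end
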